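(* Let $Q$ be a finite power associative loop satisfying $(ab^i)b^j=ab^{i+j}$ for all $a,b\in Q$ and all $i,j\in\mathbb Z$. Then the order of every $x\in Q$ divides $|Q|$.
   Context: A loop is a magma with identity in which all left and right translations are bijections; it is power associative if every element generates a subgroup (so powers $b^i$, $i\in\mathbb Z$, are well defined). *)

theory Defs
  imports Main
begin

definition loop :: "'a set \<Rightarrow> ('a \<Rightarrow> 'a \<Rightarrow> 'a) \<Rightarrow> 'a \<Rightarrow> bool" where
  "loop Q m e \<longleftrightarrow>
     (\<forall>a\<in>Q. \<forall>b\<in>Q. m a b \<in> Q) \<and> e \<in> Q \<and>
     (\<forall>a\<in>Q. m e a = a \<and> m a e = a) \<and>
     (\<forall>a\<in>Q. bij_betw (\<lambda>x. m a x) Q Q \<and> bij_betw (\<lambda>x. m x a) Q Q)"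

definition ldiv :: "'a set \<Rightarrow> ('a \<Rightarrow> 'a \<Rightarrow> 'a) \<Rightarrow> 'a \<Rightarrow> 'a \<Rightarrow> 'a" where
  "ldiv Q m a b = (THE y. y \<in> Q \<and> m a y = b)"

definition rdiv :: "'a set \<Rightarrow> ('a \<Rightarrow> 'a \<Rightarrow> 'a) \<Rightarrow> 'a \<Rightarrow> 'a \<Rightarrow> 'a" where
  "rdiv Q m b a = (THE y. y \<in> Q \<and> m y a = b)"

inductive_set subloop_gen :: "'a set \<Rightarrow> ('a \<Rightarrow> 'a \<Rightarrow> 'a) \<Rightarrow> 'a \<Rightarrow> 'a set"
  for Q m x where
  gen: "x \<in> subloop_gen Q m x"
| mult: "a \<in> subloop_gen Q m x \<Longrightarrow> b \<in> subloop_gen Q m x \<Longrightarrow> m a b \<in> subloop_gen Q m x"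
| ldv: "a \<in> subloop_gen Q m x \<Longrightarrow> b \<in> subloop_gen Q m x \<Longrightarrow> ldiv Q m a b \<in> subloop_gen Q m x"
| rdv: "a \<in> subloop_gen Q m x \<Longrightarrow> b \<in> subloop_gen Q m x \<Longrightarrow> rdiv Q m a b \<in> subloop_gen Q m x"

definition power_assoc :: "'a set \<Rightarrow> ('a \<Rightarrow> 'a \<Rightarrow> 'a) \<Rightarrow> bool" where
  "power_assoc Q m \<longleftrightarrow>
     (\<forall>x\<in>Q. \<forall>a\<in>subloop_gen Q m x. \<forall>b\<in>subloop_gen Q m x. \<forall>c\<in>subloop_gen Q m x.
        m (m a b) c = m a (m b c))"

text \<open>Powers (meaningful in a power associative loop): natural powers by
x^0 = e, x^(n+1) = x^n x; negative powers as inverses (computed as e / x^n,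
which is the group inverse inside the subgroup generated by x).\<close>
primrec npow :: "('a \<Rightarrow> 'a \<Rightarrow> 'a) \<Rightarrow> 'a \<Rightarrow> 'a \<Rightarrow> nat \<Rightarrow> 'a" where
  "npow m e x 0 = e"
| "npow m e x (Suc n) = m (npow m e x n) x"

definition ipow :: "'a set \<Rightarrow> ('a \<Rightarrow> 'a \<Rightarrow> 'a) \<Rightarrow> 'a \<Rightarrow> 'a \<Rightarrow> int \<Rightarrow> 'a" where
  "ipow Q m e x i =
     (if 0 \<le> i then npow m e x (nat i) else ldiv Q m (npow m e x (nat (- i))) e)"

definition elem_ord :: "('a \<Rightarrow> 'a \<Rightarrow> 'a) \<Rightarrow> 'a \<Rightarrow> 'a \<Rightarrow> nat" where
  "elem_ord m e x = (LEAST n. 0 < n \<and> npow m e x n = e)"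

end

theory Submission
  imports Defs
begin

locale lp =
  fixes Q :: "'a set" and m :: "'a \<Rightarrow> 'a \<Rightarrow> 'a" and e :: 'a and x :: 'a
  assumes fin: "finite Q"
    and cl: "\<And>a b. a \<in> Q \<Longrightarrow> b \<in> Q \<Longrightarrow> m a b \<in> Q"
    and eQ: "e \<in> Q" and xQ: "x \<in> Q"
    and le: "\<And>a. a \<in> Q \<Longrightarrow> m e a = a"
    and re: "\<And>a. a \<in> Q \<Longrightarrow> m a e = a"
    and canc: "\<And>a y z. a \<in> Q \<Longrightarrow> y \<in> Q \<Longrightarrow> z \<in> Q \<Longrightarrow> m a y = m a z \<Longrightarrow> y = z"
    and H: "\<And>a i j. a \<in> Q \<Longrightarrow>
       m (m a (npow m e x i)) (npow m e x j) = m a (npow m e x (i + j))"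
begin

abbreviation P where "P k \<equiv> npow m e x k"

lemma P_in: "P k \<in> Q"
  by (induction k) (auto simp: eQ xQ cl)

lemma P_add: "m (P i) (P j) = P (i + j)"
  using H[OF eQ, of i j] le[OF P_in] by simp

lemma P_cancel: assumes "i < j" "P i = P j" shows "P (j - i) = e"
proof -
  have "m (P i) (P (j - i)) = P j" using P_add[of i "j-i"] assms by simp
  also have "\<dots> = m (P i) e" using assms re[OF P_in] by simp
  finally show ?thesis using canc P_in eQ by blast
qed

lemma ex_ord: "\<exists>n>0. P n = e"
proof -
  have "\<not> inj_on P {..card Q}"
  proof
    assume "inj_on P {..card Q}"
    hence c: "card (P ` {..card Q}) = Suc (card Q)" by (simp add: card_image)
    have "P ` {..card Q} \<subseteq> Q" using P_in by auto
    hence "card (P ` {..card Q}) \<le> card Q" by (rule card_mono[OF fin])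
    with c show False by simp
  qed
  then obtain i j where ij: "i \<noteq> j" "P i = P j" unfolding inj_on_def by blast
  show ?thesis
  proof (cases "i < j")
    case True
    thus ?thesis using P_cancel[OF True ij(2)] by (intro exI[of _ "j - i"]) simp
  next
    case False
    hence "j < i" using ij(1) by simp
    thus ?thesis using P_cancel[OF \<open>j < i\<close> ij(2)[symmetric]] by (intro exI[of _ "i - j"]) simp
  qed
qed

definition n where "n = elem_ord m e x"

lemma n_pos: "0 < n" and Pn: "P n = e"
  using LeastI_ex[OF ex_ord] unfolding n_def elem_ord_def by auto

lemma n_min: "0 < k \<Longrightarrow> k < n \<Longrightarrow> P k \<noteq> e"
  using not_less_Least unfolding n_def elem_ord_def by blast

lemma mod_red: "a \<in> Q \<Longrightarrow> m a (P (r + n * q)) = m a (P r)"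
proof (induction q)
  case 0 then show ?case by simp
next
  case (Suc q)
  have "m a (P (r + n * Suc q)) = m a (P ((r + n * q) + n))" by (simp add: algebra_simps)
  also have "\<dots> = m (m a (P (r + n * q))) (P n)" using H[OF Suc.prems] by simp
  also have "\<dots> = m a (P (r + n * q))" using Pn re cl Suc.prems P_in by simp
  finally show ?case using Suc by simp
qed

lemma mod_red2: "a \<in> Q \<Longrightarrow> m a (P k) = m a (P (k mod n))"
  using mod_red[of a "k mod n" "k div n"] by simp

definition orb where "orb a = (\<lambda>k. m a (P k)) ` {..<n}"

lemma orb_sub: "a \<in> Q \<Longrightarrow> orb a \<subseteq> Q"
  unfolding orb_def using cl P_in by auto

lemma orb_self: "a \<in> Q \<Longrightarrow> a \<in> orb a"
  unfolding orb_def using n_pos re by (auto intro!: image_eqI[of _ _ 0])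

lemma orb_card: assumes "a \<in> Q" shows "card (orb a) = n"
proof -
  have "inj_on (\<lambda>k. m a (P k)) {..<n}"
  proof (rule inj_onI)
    fix i j assume i: "i \<in> {..<n}" and j: "j \<in> {..<n}" and eq: "m a (P i) = m a (P j)"
    hence eq': "P i = P j" using canc assms P_in by blast
    show "i = j"
    proof (rule ccontr)
      assume "i \<noteq> j"
      then consider "i < j" | "j < i" by linarith
      thus False
      proof cases
        case 1
        have "j - i < n" using j by auto
        then show False using P_cancel[OF 1 eq'] n_min[of "j - i"] 1 by auto
      next
        case 2
        have "i - j < n" using i by auto
        then show False using P_cancel[OF 2 eq'[symmetric]] n_min[of "i - j"] 2 by auto
      qed
    qed
  qed
  thus ?thesis unfolding orb_def by (simp add: card_image)
qed

lemma orb_mem_sub: assumes "a \<in> Q" "b \<in> orb a" shows "orb b \<subseteq> orb a"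
proof
  fix c assume "c \<in> orb b"
  then obtain k where c: "c = m b (P k)" unfolding orb_def by auto
  obtain i where b: "b = m a (P i)" using assms(2) unfolding orb_def by auto
  have "c = m a (P (i + k))" using c b H[OF assms(1)] by simp
  also have "\<dots> = m a (P ((i + k) mod n))" using mod_red2 assms(1) by blast
  finally show "c \<in> orb a" unfolding orb_def using n_pos by auto
qed

lemma orb_mem_eq: assumes "a \<in> Q" "b \<in> orb a" shows "orb b = orb a"
proof -
  have bQ: "b \<in> Q" using orb_sub assms by blast
  show ?thesis using card_subset_eq[OF finite_subset[OF orb_sub[OF assms(1)] fin] orb_mem_sub[OF assms]]
      orb_card[OF assms(1)] orb_card[OF bQ] by simp
qed

lemma main: "n dvd card Q"
proof -
  let ?C = "orb ` Q"
  have U: "\<Union>?C = Q" using orb_sub orb_self by blast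
  have "n * card ?C = card (\<Union>?C)"
  proof (rule card_partition)
    show "finite ?C" using fin by simp
    show "finite (\<Union>?C)" using U fin by simp
    show "\<And>c. c\<in>?C \<Longrightarrow> card c = n" using orb_card by auto
    show "\<And>c1 c2. c1\<in>?C \<Longrightarrow> c2\<in>?C \<Longrightarrow> c1 \<noteq> c2 \<Longrightarrow> c1 \<inter> c2 = {}"
    proof -
      fix c1 c2 assume "c1 \<in> ?C" "c2 \<in> ?C" "c1 \<noteq> c2"
      then obtain a b where ab: "a \<in> Q" "b \<in> Q" "c1 = orb a" "c2 = orb b" "orb a \<noteq> orb b" by auto
      show "c1 \<inter> c2 = {}"
      proof (rule ccontr)
        assume "c1 \<inter> c2 \<noteq> {}"
        then obtain z where "z \<in> orb a" "z \<in> orb b" using ab by auto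
        thus False using orb_mem_eq ab by metis
      qed
    qed
  qed
  thus ?thesis using U by (metis dvd_triv_left)
qed

end

theorem lemma1p10:
  fixes Q :: "'a set" and m :: "'a \<Rightarrow> 'a \<Rightarrow> 'a" and e :: 'a
  assumes "finite Q" and "loop Q m e" and "power_assoc Q m"
    and "\<forall>a\<in>Q. \<forall>b\<in>Q. \<forall>i j :: int.
           m (m a (ipow Q m e b i)) (ipow Q m e b j) = m a (ipow Q m e b (i + j))"
  shows "\<forall>x\<in>Q. elem_ord m e x dvd card Q"
proof
  fix x assume xQ: "x \<in> Q"
  have "lp Q m e x"
  proof
    show "finite Q" by fact
    show "x \<in> Q" by fact
    show "\<And>a b. a \<in> Q \<Longrightarrow> b \<in> Q \<Longrightarrow> m a b \<in> Q" "e \<in> Q"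
      "\<And>a. a \<in> Q \<Longrightarrow> m e a = a" "\<And>a. a \<in> Q \<Longrightarrow> m a e = a"
      using assms(2) unfolding loop_def by auto
    show "\<And>a y z. a \<in> Q \<Longrightarrow> y \<in> Q \<Longrightarrow> z \<in> Q \<Longrightarrow> m a y = m a z \<Longrightarrow> y = z"
    proof -
      fix a y z assume "a \<in> Q" "y \<in> Q" "z \<in> Q" "m a y = m a z"
      moreover have "inj_on (\<lambda>x. m a x) Q" using assms(2) \<open>a \<in> Q\<close> unfolding loop_def bij_betw_def by blast
      ultimately show "y = z" unfolding inj_on_def by blast
    qed
    fix a i j assume aQ: "a \<in> Q"
    show "m (m a (npow m e x i)) (npow m e x j) = m a (npow m e x (i + j))"
    proof -
      have "m (m a (ipow Q m e x (int i))) (ipow Q m e x (int j)) = m a (ipow Q m e x (int i + int j))"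
        using assms(4) aQ xQ by blast
      moreover have "\<And>k. ipow Q m e x (int k) = npow m e x k" unfolding ipow_def by simp
      ultimately show ?thesis by (metis of_nat_add)
    qed
  qed
  thus "elem_ord m e x dvd card Q" using lp.main[of Q m e x] unfolding lp.n_def[OF \<open>lp Q m e x\<close>] by blast
qed

end
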